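(* A norm $\|\cdot\|$ on $\mathbb{R}^{d+1}$ is an $F$-norm if and only if (i) it is radially symmetric, i.e. $\|\mathbf{x}\|=\|(|x_0|,\dots,|x_d|)\|$ for all $\mathbf{x}$, and (ii) there exists a random vector $\mathbf{X}=(X_1,\dots,X_d)$ satisfying $(\mathcal{H})$ such that for any $x_1,\dots,x_d>0$, the Lebesgue derivative of $t\mapsto\|(t,1/x_1,\dots,1/x_d)\|$ on $[0,\infty)$ equals $P(X_1\le tx_1,\dots,X_d\le tx_d)$ almost everywhere, and $$\|(0,1/x_1,\dots,1/x_d)\|=E\big(\max(X_1/x_1,\dots,X_d/x_d)\big).$$ In that case $\|\cdot\|=\|\cdot\|_F$ with $F$ the distribution function of $\mathbf{X}$.
   Context: Condition $(\mathcal{H})$: each $X_i$ is a.s. nonnegative with $0<E(X_i)<\infty$. For such $\mathbf{X}$ with distribution function $F$, $\|\mathbf{x}\|_F=E(\max(|x_0|,|x_1|X_1,\dots,|x_d|X_d))$, $\mathbf{x}\in\mathbb{R}^{d+1}$; an $F$-norm is any norm on $\mathbb{R}^{d+1}$ of this form. (For any norm, $t\mapsto\|(t,\mathbf{y})\|$ is convex and hence absolutely continuous on $[0,\infty)$, so its Lebesgue derivative exists a.e.) *)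

theory Defs
  imports "HOL-Probability.Probability"
begin

text \<open>R^{d+1} is modelled as real^('d option): coordinate None is x_0,
  coordinate Some i (i :: 'd, a finite type with d elements) is x_i.
  A random vector X = (X_1,...,X_d) is represented by its distribution,
  a probability measure mu on the Borel sets of real^'d.\<close>

definition is_norm :: "(real^('d::finite option) \<Rightarrow> real) \<Rightarrow> bool" where
  "is_norm N \<longleftrightarrow>
     (\<forall>x. N x = 0 \<longleftrightarrow> x = 0) \<and>
     (\<forall>c x. N (c *\<^sub>R x) = \<bar>c\<bar> * N x) \<and>
     (\<forall>x y. N (x + y) \<le> N x + N y)"

definition cond_H :: "(real^('d::finite)) measure \<Rightarrow> bool" where
  "cond_H \<mu> \<longleftrightarrow> prob_space \<mu> \<and> sets \<mu> = sets borel \<and>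
     (\<forall>i. (AE y in \<mu>. 0 \<le> y $ i) \<and> integrable \<mu> (\<lambda>y. y $ i) \<and>
          0 < (\<integral>y. y $ i \<partial>\<mu>))"

definition F_norm :: "(real^('d::finite)) measure \<Rightarrow> real^('d option) \<Rightarrow> real" where
  "F_norm \<mu> x = (\<integral>y. Max (insert \<bar>x $ None\<bar> ((\<lambda>i. \<bar>x $ Some i\<bar> * y $ i) ` UNIV)) \<partial>\<mu>)"

definition is_F_norm :: "(real^('d::finite option) \<Rightarrow> real) \<Rightarrow> bool" where
  "is_F_norm N \<longleftrightarrow> (\<exists>\<mu> :: (real^'d) measure. cond_H \<mu> \<and> (\<forall>x. N x = F_norm \<mu> x))"

definition radially_symmetric :: "(real^('d::finite option) \<Rightarrow> real) \<Rightarrow> bool" where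
  "radially_symmetric N \<longleftrightarrow> (\<forall>x. N x = N (\<chi> j. \<bar>x $ j\<bar>))"

definition tvec :: "real \<Rightarrow> real^('d::finite) \<Rightarrow> real^('d option)" where
  "tvec t x = (\<chi> j. case j of None \<Rightarrow> t | Some i \<Rightarrow> 1 / x $ i)"

definition cond_ii :: "(real^('d::finite option) \<Rightarrow> real) \<Rightarrow> (real^'d) measure \<Rightarrow> bool" where
  "cond_ii N \<mu> \<longleftrightarrow>
     (\<forall>x :: real^'d. (\<forall>i. 0 < x $ i) \<longrightarrow>
        (AE t in lborel. 0 < t \<longrightarrow>
           ((\<lambda>s. N (tvec s x)) has_real_derivative
              measure \<mu> {y. \<forall>i. y $ i \<le> t * x $ i}) (at t)) \<and>
        N (tvec 0 x) = (\<integral>y. Max ((\<lambda>i. y $ i / x $ i) ` UNIV) \<partial>\<mu>))"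

end

theory Submission
  imports Defs
begin

definition Phi :: "real^('d::finite option) \<Rightarrow> real^'d \<Rightarrow> real" where
  "Phi x y = Max (insert \<bar>x $ None\<bar> ((\<lambda>i. \<bar>x $ Some i\<bar> * y $ i) ` UNIV))"

lemma F_norm_Phi: "F_norm \<mu> x = (\<integral>y. Phi x y \<partial>\<mu>)"
  by (simp add: F_norm_def Phi_def)

lemma Phi_alt: "Phi x y = max \<bar>x $ None\<bar> (Max ((\<lambda>i. \<bar>x $ Some i\<bar> * y $ i) ` UNIV))"
  unfolding Phi_def by (subst Max_insert) auto

lemma Phi_nonneg: "0 \<le> Phi x y"
  unfolding Phi_alt by simp

lemma Phi_meas: "Phi x \<in> borel_measurable borel"
  unfolding Phi_alt by measurable

lemma condH_D:
  assumes "cond_H \<mu>"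
  shows "prob_space \<mu>" "sets \<mu> = sets borel" "\<And>i. AE y in \<mu>. 0 \<le> y $ i"
    "\<And>i. integrable \<mu> (\<lambda>y. y $ i)" "\<And>i. 0 < (\<integral>y. y $ i \<partial>\<mu>)"
  using assms unfolding cond_H_def by auto

lemma condH_space: "cond_H \<mu> \<Longrightarrow> space \<mu> = UNIV"
  using sets_eq_imp_space_eq[OF condH_D(2)] by simp

lemma condH_meas: assumes "cond_H \<mu>" "f \<in> borel_measurable borel" shows "f \<in> borel_measurable \<mu>"
  using assms(2) unfolding measurable_cong_sets[OF condH_D(2)[OF assms(1)] refl] .

lemma Phi_integrable:
  assumes H: "cond_H \<mu>"
  shows "integrable \<mu> (Phi x)"
proof -
  interpret prob_space \<mu> using condH_D(1)[OF H] .
  let ?b = "\<lambda>y. \<bar>x $ None\<bar> + (\<Sum>i\<in>UNIV. \<bar>x $ Some i\<bar> * \<bar>y $ i\<bar>)"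
  have ib: "integrable \<mu> ?b"
  proof (rule Bochner_Integration.integrable_add)
    show "integrable \<mu> (\<lambda>y. \<bar>x $ None\<bar>)" by (rule integrable_const)
    show "integrable \<mu> (\<lambda>y. \<Sum>i\<in>UNIV. \<bar>x $ Some i\<bar> * \<bar>y $ i\<bar>)"
      using condH_D(4)[OF H] by auto
  qed
  have bd: "\<bar>Phi x y\<bar> \<le> \<bar>?b y\<bar>" for y
  proof -
    have "\<bar>x $ Some i\<bar> * y $ i \<le> ?b y" for i
    proof -
      have "\<bar>x $ Some i\<bar> * y $ i \<le> \<bar>x $ Some i\<bar> * \<bar>y $ i\<bar>"
        by (simp add: mult_left_mono)
      also have "\<dots> \<le> (\<Sum>i\<in>UNIV. \<bar>x $ Some i\<bar> * \<bar>y $ i\<bar>)"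
        by (rule member_le_sum) auto
      finally show ?thesis by simp
    qed
    moreover have "0 \<le> (\<Sum>i\<in>UNIV. \<bar>x $ Some i\<bar> * \<bar>y $ i\<bar>)" by (intro sum_nonneg) auto
    ultimately have "Phi x y \<le> ?b y" unfolding Phi_alt by (intro max.boundedI Max.boundedI) auto
    then show ?thesis using Phi_nonneg[of x y] by simp
  qed
  show ?thesis
  proof (rule Bochner_Integration.integrable_bound[OF ib])
    show "Phi x \<in> borel_measurable \<mu>" by (rule condH_meas[OF H Phi_meas])
    show "AE y in \<mu>. norm (Phi x y) \<le> norm (?b y)"
      by (intro AE_I2) (simp only: real_norm_def bd)
  qed
qed

lemma Phi_triangle: "Phi (a + b) y \<le> Phi a y + Phi b y"
proof -
  have A: "\<bar>a $ None\<bar> \<le> Phi a y" "\<bar>b $ None\<bar> \<le> Phi b y"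
    "\<And>i. \<bar>a $ Some i\<bar> * y $ i \<le> Phi a y" "\<And>i. \<bar>b $ Some i\<bar> * y $ i \<le> Phi b y"
    unfolding Phi_alt by (auto intro!: max.coboundedI2 Max_ge)
  have "\<bar>(a + b) $ Some i\<bar> * y $ i \<le> Phi a y + Phi b y" for i
  proof (cases "0 \<le> y $ i")
    case True
    have "\<bar>(a + b) $ Some i\<bar> * y $ i \<le> (\<bar>a $ Some i\<bar> + \<bar>b $ Some i\<bar>) * y $ i"
      using True by (intro mult_right_mono) auto
    then show ?thesis using A(3,4)[of i] by (simp add: distrib_right)
  next
    case False
    then have "\<bar>(a + b) $ Some i\<bar> * y $ i \<le> 0" by (simp add: mult_nonneg_nonpos)
    then show ?thesis using Phi_nonneg[of a y] Phi_nonneg[of b y] by linarith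
  qed
  moreover have "\<bar>(a + b) $ None\<bar> \<le> Phi a y + Phi b y" using A(1,2) by simp
  ultimately show ?thesis unfolding Phi_alt[of "a+b"] by (intro max.boundedI Max.boundedI) auto
qed

lemma Phi_scale: "Phi (c *\<^sub>R a) y = \<bar>c\<bar> * Phi a y"
proof -
  have m: "mono (\<lambda>z::real. \<bar>c\<bar> * z)" by (simp add: mono_def mult_left_mono)
  have "\<bar>c\<bar> * Phi a y = Max ((\<lambda>z. \<bar>c\<bar> * z) ` insert \<bar>a $ None\<bar> ((\<lambda>i. \<bar>a $ Some i\<bar> * y $ i) ` UNIV))"
    unfolding Phi_def by (rule mono_Max_commute[OF m]) auto
  also have "\<dots> = Phi (c *\<^sub>R a) y"
    unfolding Phi_def by (simp add: image_image abs_mult mult.assoc)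
  finally show ?thesis by simp
qed

lemma F_triangle: "cond_H \<mu> \<Longrightarrow> F_norm \<mu> (a + b) \<le> F_norm \<mu> a + F_norm \<mu> b"
  unfolding F_norm_Phi
  by (subst Bochner_Integration.integral_add[symmetric]) (auto intro!: integral_mono Phi_integrable Phi_triangle)

lemma F_scale: "F_norm \<mu> (c *\<^sub>R a) = \<bar>c\<bar> * F_norm \<mu> a"
  unfolding F_norm_Phi Phi_scale by simp

lemma F_lip: "cond_H \<mu> \<Longrightarrow> \<bar>F_norm \<mu> a - F_norm \<mu> b\<bar> \<le> F_norm \<mu> (a - b)"
proof -
  assume H: "cond_H \<mu>"
  have "F_norm \<mu> a \<le> F_norm \<mu> b + F_norm \<mu> (a - b)" using F_triangle[OF H, of b "a - b"] by simp
  moreover have "F_norm \<mu> b \<le> F_norm \<mu> a + F_norm \<mu> (b - a)" using F_triangle[OF H, of a "b - a"] by simp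
  moreover have "F_norm \<mu> (b - a) = F_norm \<mu> (a - b)" using F_scale[of \<mu> "-1" "a - b"] by simp
  ultimately show ?thesis by linarith
qed

lemma tvec_None[simp]: "tvec t x $ None = t" and tvec_Some[simp]: "tvec t x $ Some i = 1 / x $ i"
  by (simp_all add: tvec_def)

definition Zf :: "real^'d::finite \<Rightarrow> real^'d \<Rightarrow> real" where
  "Zf x y = Max ((\<lambda>i. y $ i / x $ i) ` UNIV)"

definition G :: "(real^'d::finite) measure \<Rightarrow> real^'d \<Rightarrow> real \<Rightarrow> real" where
  "G \<mu> x t = measure \<mu> {y. \<forall>i. y $ i \<le> t * x $ i}"

lemma Phi_tvec:
  assumes "\<forall>i. 0 < x $ i" "0 \<le> t"
  shows "Phi (tvec t x) y = max t (Zf x y)"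
proof -
  have e: "(\<lambda>i. \<bar>tvec t x $ Some i\<bar> * y $ i) = (\<lambda>i. y $ i / x $ i)"
    using assms(1) by (intro ext) (simp add: abs_of_pos)
  show ?thesis unfolding Phi_alt Zf_def e tvec_None using assms(2) by simp
qed

lemma Zf_meas: "Zf x \<in> borel_measurable borel"
  unfolding Zf_def by measurable

lemma Zf_le: "\<forall>i. 0 < x $ i \<Longrightarrow> Zf x y \<le> s \<longleftrightarrow> (\<forall>i. y $ i \<le> s * x $ i)"
  unfolding Zf_def by (simp add: pos_divide_le_eq)

lemma box_sets: "{y::real^'d::finite. \<forall>i. y $ i \<le> c i} \<in> sets borel"
  by (intro borel_closed closed_Collect_all closed_Collect_le continuous_intros)

lemma G_mono: assumes H: "cond_H \<mu>" and x: "\<forall>i. 0 < x $ i" and st: "s \<le> t"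
  shows "G \<mu> x s \<le> G \<mu> x t"
proof -
  interpret prob_space \<mu> using condH_D(1)[OF H] .
  have "{y. \<forall>i. y $ i \<le> s * x $ i} \<subseteq> {y. \<forall>i. y $ i \<le> t * x $ i}"
    using x st by (auto intro: order_trans mult_right_mono less_imp_le)
  moreover have "{y. \<forall>i. y $ i \<le> t * x $ i} \<in> sets \<mu>" using box_sets condH_D(2)[OF H] by simp
  ultimately show ?thesis unfolding G_def by (rule finite_measure_mono)
qed

lemma G_bounds: assumes H: "cond_H \<mu>" shows "0 \<le> G \<mu> x t" "G \<mu> x t \<le> 1"
proof -
  interpret prob_space \<mu> using condH_D(1)[OF H] .
  show "0 \<le> G \<mu> x t" "G \<mu> x t \<le> 1" unfolding G_def by auto
qed

lemma h_bounds:
  assumes H: "cond_H \<mu>" and x: "\<forall>i. 0 < x $ i" and s: "0 \<le> s" and st: "s \<le> t"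
  shows "(t - s) * G \<mu> x s \<le> F_norm \<mu> (tvec t x) - F_norm \<mu> (tvec s x)"
    and "F_norm \<mu> (tvec t x) - F_norm \<mu> (tvec s x) \<le> (t - s) * G \<mu> x t"
proof -
  interpret prob_space \<mu> using condH_D(1)[OF H] .
  have sp: "space \<mu> = UNIV" by (rule condH_space[OF H])
  define A where "A r = {y::real^'a. \<forall>i. y $ i \<le> r * x $ i}" for r
  have As: "A r \<in> sets \<mu>" for r unfolding A_def using box_sets condH_D(2)[OF H] by simp
  have Ai: "integrable \<mu> (\<lambda>y. (t - s) * indicator (A r) y)" for r
    using As by (intro integrable_mult_right integrable_indicator) (auto simp: less_top[symmetric])
  have Aint: "(\<integral>y. (t - s) * indicator (A r) y \<partial>\<mu>) = (t - s) * G \<mu> x r" for r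
    by (simp add: G_def A_def sp)
  have t: "0 \<le> t" using s st by linarith
  have diff: "F_norm \<mu> (tvec t x) - F_norm \<mu> (tvec s x) = (\<integral>y. max t (Zf x y) - max s (Zf x y) \<partial>\<mu>)"
    unfolding F_norm_Phi
    by (subst Bochner_Integration.integral_diff[symmetric])
       (auto simp: Phi_tvec[OF x t] Phi_tvec[OF x s] intro!: Phi_integrable[OF H])
  have ii: "integrable \<mu> (\<lambda>y. max t (Zf x y) - max s (Zf x y))"
  proof -
    have "integrable \<mu> (\<lambda>y. Phi (tvec t x) y - Phi (tvec s x) y)"
      by (intro Bochner_Integration.integrable_diff Phi_integrable[OF H])
    then show ?thesis by (simp add: Phi_tvec[OF x t] Phi_tvec[OF x s])
  qed
  have "(t - s) * G \<mu> x s = (\<integral>y. (t - s) * indicator (A s) y \<partial>\<mu>)" by (rule Aint[symmetric])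
  also have "\<dots> \<le> (\<integral>y. max t (Zf x y) - max s (Zf x y) \<partial>\<mu>)"
  proof (rule integral_mono[OF Ai ii])
    fix y show "(t - s) * indicator (A s) y \<le> max t (Zf x y) - max s (Zf x y)"
      using st Zf_le[OF x, of y s] by (cases "y \<in> A s") (auto simp: A_def)
  qed
  finally show "(t - s) * G \<mu> x s \<le> F_norm \<mu> (tvec t x) - F_norm \<mu> (tvec s x)" using diff by simp
  have "(\<integral>y. max t (Zf x y) - max s (Zf x y) \<partial>\<mu>) \<le> (\<integral>y. (t - s) * indicator (A t) y \<partial>\<mu>)"
  proof (rule integral_mono[OF ii Ai])
    fix y show "max t (Zf x y) - max s (Zf x y) \<le> (t - s) * indicator (A t) y"
      using st Zf_le[OF x, of y t] by (cases "y \<in> A t") (auto simp: A_def)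
  qed
  also have "\<dots> = (t - s) * G \<mu> x t" by (rule Aint)
  finally show "F_norm \<mu> (tvec t x) - F_norm \<mu> (tvec s x) \<le> (t - s) * G \<mu> x t" using diff by simp
qed

lemma dense_AE:
  assumes "AE t in lborel. P t" "u < (v::real)"
  shows "\<exists>t. u < t \<and> t < v \<and> P t"
proof (rule ccontr)
  assume "\<not> ?thesis"
  then have sub: "{u<..<v} \<subseteq> {t. \<not> P t}" by auto
  from assms(1) obtain N where N: "{x \<in> space lborel. \<not> P x} \<subseteq> N" "emeasure lborel N = 0" "N \<in> sets lborel"
    by (rule AE_E)
  have "emeasure lborel {u<..<v} \<le> emeasure lborel N"
    using sub N by (intro emeasure_mono) auto
  then have "emeasure lborel {u<..<v} = 0" using N(2) by simp
  then show False using assms(2) by simp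
qed

lemma step_small:
  fixes k g :: "real \<Rightarrow> real"
  assumes A: "\<bar>k b - k a\<bar> \<le> (g b - g a) * (b - a)" and ga: "g a \<le> g b" and ab: "a < b" "b - a \<le> \<delta>"
  shows "\<bar>k b - k a\<bar> \<le> \<delta> * (g b - g a)"
proof -
  have "(g b - g a) * (b - a) \<le> (g b - g a) * \<delta>" using ab ga by (intro mult_left_mono) auto
  then show ?thesis using A by (simp add: mult.commute)
qed

lemma step_comb:
  fixes k g :: "real \<Rightarrow> real"
  assumes "\<bar>k b - k c\<bar> \<le> \<delta> * (g b - g c)" "\<bar>k c - k a\<bar> \<le> \<delta> * (g c - g a)"
  shows "\<bar>k b - k a\<bar> \<le> \<delta> * (g b - g a)"
proof -
  have "\<bar>k b - k a\<bar> \<le> \<bar>k b - k c\<bar> + \<bar>k c - k a\<bar>"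
    using abs_triangle_ineq[of "k b - k c" "k c - k a"] by simp
  also have "\<dots> \<le> \<delta> * (g b - g c) + \<delta> * (g c - g a)" using assms by (rule add_mono)
  also have "\<dots> = \<delta> * (g b - g a)" by (simp add: algebra_simps)
  finally show ?thesis .
qed

lemma half_contr: "(z::real) \<le> z / 2 \<Longrightarrow> 0 < z / 2 \<Longrightarrow> False"
  by linarith

lemma const_lemma:
  fixes k g :: "real \<Rightarrow> real" and D :: "real set"
  assumes A: "\<And>s t. s \<in> D \<Longrightarrow> t \<in> D \<Longrightarrow> s < t \<Longrightarrow> \<bar>k t - k s\<bar> \<le> (g t - g s) * (t - s)"
    and gm: "\<And>s t. s \<le> t \<Longrightarrow> g s \<le> g t" and g01: "\<And>t. 0 \<le> g t \<and> g t \<le> 1"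
    and dense: "\<And>u v. 0 \<le> u \<Longrightarrow> u < v \<Longrightarrow> \<exists>t\<in>D. u < t \<and> t < v"
    and Dpos: "\<And>t. t \<in> D \<Longrightarrow> 0 < t"
  shows "a \<in> D \<Longrightarrow> b \<in> D \<Longrightarrow> k a = k b"
proof -
  have claim: "\<And>a b. a \<in> D \<Longrightarrow> b \<in> D \<Longrightarrow> a \<le> b \<Longrightarrow> b - a \<le> real n * \<delta> / 2 \<Longrightarrow>
        \<bar>k b - k a\<bar> \<le> \<delta> * (g b - g a)" if d: "\<delta> > 0" for \<delta> n
  proof (induction n)
    case 0
    then have "a = b" by simp
    then show ?case by simp
  next
    case (Suc n a b)
    note a = Suc.prems(1) and b = Suc.prems(2) and le = Suc.prems(3) and bd = Suc.prems(4)
    show ?case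
    proof (cases "b - a \<le> \<delta>")
      case True
      show ?thesis
      proof (cases "a = b")
        case True then show ?thesis by simp
      next
        case False
        then have "a < b" using le by simp
        show ?thesis by (rule step_small[OF A[OF a b \<open>a < b\<close>] gm[OF le] \<open>a < b\<close> True])
      qed
    next
      case False
      have "0 < a" using Dpos[OF a] .
      then have u: "0 \<le> b - \<delta>" using False by simp
      have uv: "b - \<delta> < b - \<delta>/2" using d by simp
      obtain c where c: "c \<in> D" "b - \<delta> < c" "c < b - \<delta>/2" using dense[OF u uv] by blast
      have ac: "a \<le> c" using c(2) False by simp
      have cb: "c < b" using c(3) d by simp
      have "c - a \<le> real n * \<delta> / 2"
      proof -
        have "real (Suc n) * \<delta> / 2 = real n * \<delta> / 2 + \<delta> / 2" by (simp add: algebra_simps)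
        then show ?thesis using c(3) bd by linarith
      qed
      then have IH: "\<bar>k c - k a\<bar> \<le> \<delta> * (g c - g a)" by (rule Suc.IH[OF a c(1) ac])
      have cb2: "b - c \<le> \<delta>" using c(2) by simp
      have "\<bar>k b - k c\<bar> \<le> \<delta> * (g b - g c)"
        by (rule step_small[OF A[OF c(1) b cb] gm[of c b] cb cb2]) (simp add: less_imp_le[OF cb])
      then show ?thesis using IH by (rule step_comb)
    qed
  qed
  have main: "k a = k b" if ab: "a \<in> D" "b \<in> D" "a \<le> b" for a b
  proof -
    have small: "\<bar>k b - k a\<bar> \<le> \<delta>" if d: "\<delta> > 0" for \<delta>
    proof -
      obtain n where n: "2 * (b - a) / \<delta> \<le> real n" using real_arch_simple by blast
      then have "b - a \<le> real n * \<delta> / 2" using d by (simp add: field_simps)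
      then have "\<bar>k b - k a\<bar> \<le> \<delta> * (g b - g a)" by (rule claim[OF d ab])
      also have "\<dots> \<le> \<delta> * 1" using g01[of a] g01[of b] d by (intro mult_left_mono) auto
      finally show ?thesis by simp
    qed
    show ?thesis
    proof (rule ccontr)
      assume ne: "k a \<noteq> k b"
      then have pos: "0 < \<bar>k b - k a\<bar> / 2" by simp
      have "\<bar>k b - k a\<bar> \<le> \<bar>k b - k a\<bar> / 2" by (rule small[OF pos])
      then show False using pos by (rule half_contr)
    qed
  qed
  assume aD: "a \<in> D" and bD: "b \<in> D"
  show ?thesis
  proof (cases "a \<le> b")
    case True then show ?thesis by (rule main[OF aD bD])
  next
    case False then have "b \<le> a" by simp
    then have "k b = k a" by (rule main[OF bD aD])
    then show ?thesis by (rule sym)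
  qed
qed


lemma zero_lemma:
  fixes k :: "real \<Rightarrow> real" and D :: "real set"
  assumes const: "\<And>a b. a \<in> D \<Longrightarrow> b \<in> D \<Longrightarrow> k a = k b"
    and dense: "\<And>u v. 0 \<le> u \<Longrightarrow> u < v \<Longrightarrow> \<exists>t\<in>D. u < t \<and> t < v"
    and lip: "\<And>u v. 0 \<le> u \<Longrightarrow> 0 \<le> v \<Longrightarrow> \<bar>k u - k v\<bar> \<le> C * \<bar>u - v\<bar>"
    and C: "0 < C" and k0: "k 0 = 0" and t: "0 \<le> t"
  shows "k t = 0"
proof (rule ccontr)
  assume nz: "k t \<noteq> 0"
  define e where "e = \<bar>k t\<bar> / (4 * C)"
  have e: "0 < e" using nz C by (simp add: e_def)
  obtain a where a: "a \<in> D" "t < a" "a < t + e" using dense[OF t, of "t + e"] e by auto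
  obtain a' where a': "a' \<in> D" "0 < a'" "a' < e" using dense[of 0 e] e by auto
  have "\<bar>k t - k a\<bar> \<le> C * \<bar>t - a\<bar>" using lip[OF t, of a] a t by simp
  also have "\<dots> \<le> C * e" using a C by (intro mult_left_mono) auto
  finally have 1: "\<bar>k t - k a\<bar> \<le> C * e" .
  have "\<bar>k a' - k 0\<bar> \<le> C * \<bar>a' - 0\<bar>" using lip[of a' 0] a' by simp
  also have "\<dots> \<le> C * e" using a' C by (intro mult_left_mono) auto
  finally have 2: "\<bar>k a' - k 0\<bar> \<le> C * e" .
  have "k a = k a'" using const a(1) a'(1) by blast
  then have "\<bar>k t\<bar> \<le> 2 * (C * e)" using 1 2 k0 by linarith
  also have "\<dots> = \<bar>k t\<bar> / 2" using C by (simp add: e_def)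
  finally show False using nz by simp
qed

lemma normD:
  assumes "is_norm N"
  shows "N (c *\<^sub>R x) = \<bar>c\<bar> * N x" "N (x + y) \<le> N x + N y" "N 0 = 0"
  using assms unfolding is_norm_def by auto

lemma norm_nonneg': assumes "is_norm N" shows "0 \<le> N x"
proof -
  have "N (x + (-1) *\<^sub>R x) \<le> N x + N ((-1) *\<^sub>R x)" by (rule normD(2)[OF assms])
  also have "N ((-1) *\<^sub>R x) = N x" using normD(1)[OF assms, of "-1" x] by simp
  finally have "N 0 \<le> 2 * N x" by simp
  then show ?thesis using normD(3)[OF assms] by simp
qed

lemma norm_lip: assumes "is_norm N" shows "\<bar>N a - N b\<bar> \<le> N (a - b)"
proof -
  have 1: "N a \<le> N b + N (a - b)" using normD(2)[OF assms, of b "a - b"] by simp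
  have 2: "N b \<le> N a + N (b - a)" using normD(2)[OF assms, of a "b - a"] by simp
  have 3: "N (b - a) = N (a - b)" using normD(1)[OF assms, of "-1" "a - b"] by simp
  show ?thesis using 1 2 3 by linarith
qed

lemma tvec_comb: "tvec ((1 - t) * a + t * b) x = (1 - t) *\<^sub>R tvec a x + t *\<^sub>R tvec b x"
proof -
  have "tvec ((1 - t) * a + t * b) x $ j = ((1 - t) *\<^sub>R tvec a x + t *\<^sub>R tvec b x) $ j" for j
  proof (cases j)
    case None then show ?thesis by simp
  next
    case (Some i)
    have c: "(1 - t) * c + t * c = c" for c :: real by (simp add: algebra_simps)
    show ?thesis using Some by (simp add: add_divide_distrib[symmetric])
  qed
  then show ?thesis by (simp add: vec_eq_iff)
qed

definition e0 :: "real^('d::finite option)" where "e0 = (\<chi> j. if j = None then 1 else 0)"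

lemma tvec_diff: "tvec u x - tvec v x = (u - v) *\<^sub>R e0"
proof -
  have "(tvec u x - tvec v x) $ j = ((u - v) *\<^sub>R e0) $ j" for j
    by (cases j) (simp_all add: e0_def)
  then show ?thesis by (simp add: vec_eq_iff)
qed

lemma f_convex: assumes "is_norm N" shows "convex_on UNIV (\<lambda>s. N (tvec s x))"
proof (rule convex_onI)
  fix t a b :: real assume t: "0 < t" "t < 1"
  have "N (tvec ((1 - t) *\<^sub>R a + t *\<^sub>R b) x) = N ((1 - t) *\<^sub>R tvec a x + t *\<^sub>R tvec b x)"
    using tvec_comb[of t a b x] by simp
  also have "\<dots> \<le> N ((1 - t) *\<^sub>R tvec a x) + N (t *\<^sub>R tvec b x)" by (rule normD(2)[OF assms])
  also have "\<dots> = (1 - t) * N (tvec a x) + t * N (tvec b x)" using t by (simp add: normD(1)[OF assms])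
  finally show "N (tvec ((1 - t) *\<^sub>R a + t *\<^sub>R b) x) \<le> (1 - t) * N (tvec a x) + t * N (tvec b x)" .
qed auto

lemma h0:
  assumes H: "cond_H \<mu>" and x: "\<forall>i. 0 < x $ i"
  shows "F_norm \<mu> (tvec 0 x) = (\<integral>y. Max ((\<lambda>i. y $ i / x $ i) ` UNIV) \<partial>\<mu>)"
proof -
  have "F_norm \<mu> (tvec 0 x) = (\<integral>y. max 0 (Zf x y) \<partial>\<mu>)"
  proof -
    have "Phi (tvec 0 x) = (\<lambda>y. max 0 (Zf x y))" by (rule ext) (rule Phi_tvec[OF x order_refl])
    then show ?thesis unfolding F_norm_Phi by simp
  qed
  also have "\<dots> = (\<integral>y. Zf x y \<partial>\<mu>)"
  proof (rule integral_cong_AE)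
    show "(\<lambda>y. max 0 (Zf x y)) \<in> borel_measurable \<mu>"
      by (intro condH_meas[OF H] borel_measurable_max borel_measurable_const Zf_meas)
    show "Zf x \<in> borel_measurable \<mu>" by (intro condH_meas[OF H] Zf_meas)
    have "AE y in \<mu>. \<forall>i. 0 \<le> y $ i" unfolding AE_all_countable using condH_D(3)[OF H] by blast
    then show "AE y in \<mu>. max 0 (Zf x y) = Zf x y"
    proof (rule eventually_mono)
      fix y :: "real^'a" assume y: "\<forall>i. 0 \<le> y $ i"
      obtain i :: 'a where True by simp
      have "y $ i / x $ i \<le> Zf x y" unfolding Zf_def by (rule Max_ge) auto
      moreover have "0 \<le> y $ i / x $ i" using y x by (simp add: less_imp_le)
      ultimately show "max 0 (Zf x y) = Zf x y" by simp
    qed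
  qed
  finally show ?thesis by (simp add: Zf_def)
qed

lemma h_lip:
  assumes H: "cond_H \<mu>" and x: "\<forall>i. 0 < x $ i" and u: "0 \<le> u" and v: "0 \<le> v"
  shows "\<bar>F_norm \<mu> (tvec u x) - F_norm \<mu> (tvec v x)\<bar> \<le> \<bar>u - v\<bar>"
proof -
  have *: "\<bar>F_norm \<mu> (tvec t x) - F_norm \<mu> (tvec s x)\<bar> \<le> \<bar>t - s\<bar>" if "0 \<le> s" "s \<le> t" for s t
  proof -
    have "(t - s) * G \<mu> x s \<le> F_norm \<mu> (tvec t x) - F_norm \<mu> (tvec s x)" by (rule h_bounds(1)[OF H x that])
    moreover have "F_norm \<mu> (tvec t x) - F_norm \<mu> (tvec s x) \<le> (t - s) * G \<mu> x t" by (rule h_bounds(2)[OF H x that])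
    moreover have "0 \<le> (t - s) * G \<mu> x s" using that G_bounds[OF H] by simp
    moreover have "(t - s) * G \<mu> x t \<le> (t - s) * 1" using that G_bounds[OF H] by (intro mult_left_mono) auto
    ultimately show ?thesis using that by simp
  qed
  show ?thesis
  proof (cases "v \<le> u")
    case True then show ?thesis using *[OF v True] by simp
  next
    case False then have "u \<le> v" by simp
    then show ?thesis using *[OF u \<open>u \<le> v\<close>] by (simp add: abs_minus_commute)
  qed
qed

lemma eps_zero:
  fixes d C :: real
  assumes "\<And>e. 0 < e \<Longrightarrow> \<bar>d\<bar> \<le> e * C" and "0 \<le> C"
  shows "d = 0"
proof (rule ccontr)
  assume "d \<noteq> 0"
  obtain q where q: "q = C + 1" by simp
  define e where "e = \<bar>d\<bar> / 2 / q"
  have C1: "0 < q" using assms(2) q by simp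
  have e: "0 < e" using \<open>d \<noteq> 0\<close> C1 by (simp add: e_def)
  have "e * C \<le> e * q" using e q by simp
  also have "\<dots> = \<bar>d\<bar> / 2" unfolding e_def using C1 by simp
  finally have "\<bar>d\<bar> \<le> \<bar>d\<bar> / 2" using assms(1)[OF e] by linarith
  moreover have "0 < \<bar>d\<bar> / 2" using \<open>d \<noteq> 0\<close> by simp
  ultimately show False by (rule half_contr)
qed

lemma core:
  assumes Nn: "is_norm N" and H: "cond_H \<mu>" and ii: "cond_ii N \<mu>" and x: "\<forall>i. 0 < x $ i"
    and t: "0 \<le> t"
  shows "N (tvec t x) = F_norm \<mu> (tvec t x)"
proof -
  define f where "f s = N (tvec s x)" for s
  define h where "h s = F_norm \<mu> (tvec s x)" for s
  define g where "g s = G \<mu> x s" for s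
  define k where "k s = f s - h s" for s
  have iix: "(AE t in lborel. 0 < t \<longrightarrow> (f has_real_derivative g t) (at t))"
    and f0: "f 0 = (\<integral>y. Max ((\<lambda>i. y $ i / x $ i) ` UNIV) \<partial>\<mu>)"
    using ii x unfolding cond_ii_def f_def g_def G_def by auto
  define D where "D = {t. 0 < t \<and> (f has_real_derivative g t) (at t)}"
  have dense: "\<exists>t\<in>D. u < t \<and> t < v" if uv: "0 \<le> u" "u < v" for u v
  proof -
    obtain s where s: "u < s" "s < v" "0 < s \<longrightarrow> (f has_real_derivative g s) (at s)"
      using dense_AE[OF iix uv(2)] by blast
    have "0 < s" using s(1) uv(1) by simp
    then have "s \<in> D" using s(3) unfolding D_def by simp
    then show ?thesis using s by blast
  qed
  have Dpos: "\<And>t. t \<in> D \<Longrightarrow> 0 < t" unfolding D_def by simp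
  have gm: "\<And>s t. s \<le> t \<Longrightarrow> g s \<le> g t" unfolding g_def by (rule G_mono[OF H x])
  have g01: "\<And>t. 0 \<le> g t \<and> g t \<le> 1" unfolding g_def using G_bounds[OF H] by simp
  have cvx: "convex_on UNIV f" unfolding f_def by (rule f_convex[OF Nn])
  have tang: "g s * (t - s) \<le> f t - f s" if "s \<in> D" for s t
  proof -
    have d: "(f has_field_derivative g s) (at s within UNIV)" using that unfolding D_def by simp
    show ?thesis by (rule convex_on_imp_above_tangent[OF cvx connected_UNIV _ _ d]) auto
  qed
  have A: "\<bar>k t - k s\<bar> \<le> (g t - g s) * (t - s)" if s: "s \<in> D" and t: "t \<in> D" and st: "s < t" for s t
  proof -
    have 1: "g s * (t - s) \<le> f t - f s" by (rule tang[OF s])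
    have 2: "g t * (s - t) \<le> f s - f t" by (rule tang[OF t])
    have s0: "0 \<le> s" using Dpos[OF s] by simp
    have 3: "(t - s) * g s \<le> h t - h s" unfolding h_def g_def by (rule h_bounds(1)[OF H x s0 less_imp_le[OF st]])
    have 4: "h t - h s \<le> (t - s) * g t" unfolding h_def g_def by (rule h_bounds(2)[OF H x s0 less_imp_le[OF st]])
    have e1: "g t * (s - t) = - ((t - s) * g t)" by (simp add: algebra_simps)
    have e2: "g s * (t - s) = (t - s) * g s" by (simp add: algebra_simps)
    have e3: "(g t - g s) * (t - s) = (t - s) * g t - (t - s) * g s" by (simp add: algebra_simps)
    have "k t - k s = (f t - f s) - (h t - h s)" unfolding k_def by simp
    then show ?thesis unfolding abs_le_iff e3 using 1 2 3 4 e1 e2 by linarith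
  qed
  have const: "\<And>a b. a \<in> D \<Longrightarrow> b \<in> D \<Longrightarrow> k a = k b"
    by (rule const_lemma[of D k g, OF A gm g01 dense Dpos]) auto
  define C where "C = N e0 + 1"
  have C: "0 < C" unfolding C_def using norm_nonneg'[OF Nn, of e0] by simp
  have lip: "\<bar>k u - k v\<bar> \<le> C * \<bar>u - v\<bar>" if u: "0 \<le> u" and v: "0 \<le> v" for u v
  proof -
    have "\<bar>f u - f v\<bar> \<le> N (tvec u x - tvec v x)" unfolding f_def by (rule norm_lip[OF Nn])
    also have "\<dots> = \<bar>u - v\<bar> * N e0" unfolding tvec_diff by (rule normD(1)[OF Nn])
    finally have 1: "\<bar>f u - f v\<bar> \<le> \<bar>u - v\<bar> * N e0" .
    have 2: "\<bar>h u - h v\<bar> \<le> \<bar>u - v\<bar>" unfolding h_def by (rule h_lip[OF H x u v])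
    have 3: "\<bar>k u - k v\<bar> \<le> \<bar>f u - f v\<bar> + \<bar>h u - h v\<bar>" unfolding k_def by simp
    have 4: "C * \<bar>u - v\<bar> = \<bar>u - v\<bar> * N e0 + \<bar>u - v\<bar>" unfolding C_def by (simp add: algebra_simps)
    show ?thesis using 1 2 3 4 by linarith
  qed
  have k0: "k 0 = 0" unfolding k_def f0 h_def using h0[OF H x] by simp
  have "k t = 0" by (rule zero_lemma[of D k C t, OF const dense lip C k0 t]) auto
  then show ?thesis unfolding k_def f_def h_def by simp
qed

lemma h_deriv:
  assumes H: "cond_H \<mu>" and x: "\<forall>i. 0 < x $ i" and t: "0 < t" and c: "isCont (G \<mu> x) t"
  shows "((\<lambda>s. F_norm \<mu> (tvec s x)) has_real_derivative G \<mu> x t) (at t)"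
proof -
  define h where "h s = F_norm \<mu> (tvec s x)" for s
  define g where "g = G \<mu> x"
  have gl: "(g \<longlongrightarrow> g t) (at t)" using isContD[OF c] unfolding g_def .
  have ev: "eventually (\<lambda>y. y \<noteq> t \<and> 0 < y) (at t)"
    unfolding eventually_at using t by (intro exI[of _ t]) (auto simp: dist_real_def)
  have lo: "eventually (\<lambda>y. min (g t) (g y) \<le> (h y - h t) / (y - t)) (at t)"
   and up: "eventually (\<lambda>y. (h y - h t) / (y - t) \<le> max (g t) (g y)) (at t)"
  proof -
    have b: "min (g t) (g y) \<le> (h y - h t) / (y - t) \<and> (h y - h t) / (y - t) \<le> max (g t) (g y)"
      if y: "y \<noteq> t" "0 < y" for y
    proof (cases "t < y")
      case True
      have 1: "(y - t) * g t \<le> h y - h t" unfolding h_def g_def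
        by (rule h_bounds(1)[OF H x less_imp_le[OF t] less_imp_le[OF True]])
      have 2: "h y - h t \<le> (y - t) * g y" unfolding h_def g_def
        by (rule h_bounds(2)[OF H x less_imp_le[OF t] less_imp_le[OF True]])
      have p: "0 < y - t" using True by simp
      have "g t \<le> (h y - h t) / (y - t)" using 1 p by (simp add: pos_le_divide_eq mult.commute)
      moreover have "(h y - h t) / (y - t) \<le> g y" using 2 p by (simp add: pos_divide_le_eq mult.commute)
      ultimately show ?thesis by simp
    next
      case False
      then have yt: "y < t" using y by simp
      have 1: "(t - y) * g y \<le> h t - h y" unfolding h_def g_def
        by (rule h_bounds(1)[OF H x less_imp_le[OF y(2)] less_imp_le[OF yt]])
      have 2: "h t - h y \<le> (t - y) * g t" unfolding h_def g_def
        by (rule h_bounds(2)[OF H x less_imp_le[OF y(2)] less_imp_le[OF yt]])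
      have p: "0 < t - y" using yt by simp
      have eq: "(h y - h t) / (y - t) = (h t - h y) / (t - y)"
        by (metis minus_diff_eq minus_divide_divide)
      have "g y \<le> (h t - h y) / (t - y)" using 1 p by (simp add: pos_le_divide_eq mult.commute)
      moreover have "(h t - h y) / (t - y) \<le> g t" using 2 p by (simp add: pos_divide_le_eq mult.commute)
      ultimately show ?thesis unfolding eq by simp
    qed
    show "eventually (\<lambda>y. min (g t) (g y) \<le> (h y - h t) / (y - t)) (at t)"
      using ev by (rule eventually_mono) (use b in blast)
    show "eventually (\<lambda>y. (h y - h t) / (y - t) \<le> max (g t) (g y)) (at t)"
      using ev by (rule eventually_mono) (use b in blast)
  qed
  have l1: "((\<lambda>y. min (g t) (g y)) \<longlongrightarrow> g t) (at t)"
    using tendsto_min[OF tendsto_const[of "g t"] gl] by simp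
  have l2: "((\<lambda>y. max (g t) (g y)) \<longlongrightarrow> g t) (at t)"
    using tendsto_max[OF tendsto_const[of "g t"] gl] by simp
  have "((\<lambda>y. (h y - h t) / (y - t)) \<longlongrightarrow> g t) (at t)"
    by (rule tendsto_sandwich[OF lo up l1 l2])
  then show ?thesis unfolding has_field_derivative_iff h_def g_def .
qed

lemma dir1:
  assumes H: "cond_H \<mu>" and eq: "\<forall>x. N x = F_norm \<mu> x"
  shows "cond_ii N \<mu>"
  unfolding cond_ii_def
proof (intro allI impI conjI)
  fix x :: "real^'a" assume x: "\<forall>i. 0 < x $ i"
  have m: "mono (G \<mu> x)" by (rule monoI) (rule G_mono[OF H x])
  have "{a. \<not> isCont (G \<mu> x) a} \<in> null_sets lborel"
    by (rule countable_imp_null_set_lborel[OF mono_ctble_discont[OF m]])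
  from AE_not_in[OF this]
  show "AE t in lborel. 0 < t \<longrightarrow> ((\<lambda>s. N (tvec s x)) has_real_derivative
          measure \<mu> {y. \<forall>i. y $ i \<le> t * x $ i}) (at t)"
  proof (rule eventually_mono)
    fix t assume "t \<notin> {a. \<not> isCont (G \<mu> x) a}"
    then have c: "isCont (G \<mu> x) t" by simp
    have ee: "(\<lambda>s. N (tvec s x)) = (\<lambda>s. F_norm \<mu> (tvec s x))" using eq by simp
    show "0 < t \<longrightarrow> ((\<lambda>s. N (tvec s x)) has_real_derivative measure \<mu> {y. \<forall>i. y $ i \<le> t * x $ i}) (at t)"
      using h_deriv[OF H x _ c] unfolding ee G_def by simp
  qed
  show "N (tvec 0 x) = (\<integral>y. Max ((\<lambda>i. y $ i / x $ i) ` UNIV) \<partial>\<mu>)"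
    using h0[OF H x] eq by simp
qed

lemma pos_case:
  assumes Nn: "is_norm N" and H: "cond_H \<mu>" and ii: "cond_ii N \<mu>"
    and v0: "0 \<le> v $ None" and vi: "\<forall>i. 0 < v $ Some i"
  shows "N v = F_norm \<mu> v"
proof -
  define x' :: "real^'a" where "x' = (\<chi> i. 1 / v $ Some i)"
  have x': "\<forall>i. 0 < x' $ i" using vi by (simp add: x'_def)
  have tv: "tvec (v $ None) x' = v"
  proof -
    have "tvec (v $ None) x' $ j = v $ j" for j by (cases j) (simp_all add: x'_def)
    then show ?thesis by (simp add: vec_eq_iff)
  qed
  show ?thesis using core[OF Nn H ii x' v0] unfolding tv .
qed

lemma dir2:
  assumes Nn: "is_norm N" and rs: "radially_symmetric N" and H: "cond_H \<mu>" and ii: "cond_ii N \<mu>"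
  shows "N x = F_norm \<mu> x"
proof -
  define a where "a = (\<chi> j. \<bar>x $ j\<bar>)"
  define w :: "real^('a option)" where "w = (\<chi> j. if j = None then 0 else 1)"
  have Na: "N x = N a" using rs unfolding radially_symmetric_def a_def by blast
  have Fa: "F_norm \<mu> x = F_norm \<mu> a" unfolding a_def F_norm_def by simp
  have Fw: "0 \<le> F_norm \<mu> w" unfolding F_norm_Phi by (rule Bochner_Integration.integral_nonneg) (rule Phi_nonneg)
  have Nw: "0 \<le> N w" by (rule norm_nonneg'[OF Nn])
  have bound: "\<bar>N a - F_norm \<mu> a\<bar> \<le> e * (N w + F_norm \<mu> w)" if e: "0 < e" for e
  proof -
    define v where "v = a + e *\<^sub>R w"
    have v0: "0 \<le> v $ None" by (simp add: v_def a_def w_def)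
    have vi: "\<forall>i. 0 < v $ Some i" using e by (simp add: v_def a_def w_def add_nonneg_pos)
    have eqv: "N v = F_norm \<mu> v" by (rule pos_case[OF Nn H ii v0 vi])
    have "\<bar>N v - N a\<bar> \<le> N (v - a)" by (rule norm_lip[OF Nn])
    also have "\<dots> = e * N w" unfolding v_def using normD(1)[OF Nn, of e w] e by simp
    finally have 1: "\<bar>N v - N a\<bar> \<le> e * N w" .
    have "\<bar>F_norm \<mu> v - F_norm \<mu> a\<bar> \<le> F_norm \<mu> (v - a)" by (rule F_lip[OF H])
    also have "\<dots> = e * F_norm \<mu> w" unfolding v_def using F_scale[of \<mu> e w] e by simp
    finally have 2: "\<bar>F_norm \<mu> v - F_norm \<mu> a\<bar> \<le> e * F_norm \<mu> w" .
    have 3: "e * (N w + F_norm \<mu> w) = e * N w + e * F_norm \<mu> w" by (simp add: algebra_simps)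
    show ?thesis using 1 2 3 eqv by linarith
  qed
  have "N a - F_norm \<mu> a = 0" by (rule eps_zero[OF bound add_nonneg_nonneg[OF Nw Fw]])
  then show ?thesis using Na Fa by simp
qed

theorem theorem2p9:
  fixes N :: "real^('d::finite option) \<Rightarrow> real"
  assumes "is_norm N"
  shows "(is_F_norm N \<longleftrightarrow>
            radially_symmetric N \<and> (\<exists>\<mu> :: (real^'d) measure. cond_H \<mu> \<and> cond_ii N \<mu>))
       \<and> (\<forall>\<mu> :: (real^'d) measure. radially_symmetric N \<and> cond_H \<mu> \<and> cond_ii N \<mu>
            \<longrightarrow> (\<forall>x. N x = F_norm \<mu> x))"
proof -
  have P2: "\<forall>\<mu> :: (real^'d) measure. radially_symmetric N \<and> cond_H \<mu> \<and> cond_ii N \<mu>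
            \<longrightarrow> (\<forall>x. N x = F_norm \<mu> x)"
    using dir2[OF assms] by blast
  have P1: "is_F_norm N \<longleftrightarrow>
            radially_symmetric N \<and> (\<exists>\<mu> :: (real^'d) measure. cond_H \<mu> \<and> cond_ii N \<mu>)"
  proof
    assume "radially_symmetric N \<and> (\<exists>\<mu> :: (real^'d) measure. cond_H \<mu> \<and> cond_ii N \<mu>)"
    then obtain \<mu> :: "(real^'d) measure" where rs: "radially_symmetric N" and H: "cond_H \<mu>" and ii: "cond_ii N \<mu>"
      by blast
    have "\<forall>x. N x = F_norm \<mu> x" using dir2[OF assms rs H ii] by blast
    then show "is_F_norm N" unfolding is_F_norm_def using H by blast
  next
    assume "is_F_norm N"
    then obtain \<mu> :: "(real^'d) measure" where H: "cond_H \<mu>" and eq: "\<forall>x. N x = F_norm \<mu> x"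
      unfolding is_F_norm_def by blast
    have "radially_symmetric N" unfolding radially_symmetric_def
    proof
      fix x :: "real^('d option)"
      have "F_norm \<mu> x = F_norm \<mu> (\<chi> j. \<bar>x $ j\<bar>)" unfolding F_norm_def by simp
      then show "N x = N (\<chi> j. \<bar>x $ j\<bar>)" using eq by simp
    qed
    moreover have "cond_ii N \<mu>" by (rule dir1[OF H eq])
    ultimately show "radially_symmetric N \<and> (\<exists>\<mu> :: (real^'d) measure. cond_H \<mu> \<and> cond_ii N \<mu>)"
      using H by blast
  qed
  show ?thesis using P1 P2 by blast
qed

end
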